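(* For each state $m$, $$I(m)=\sup_{\mu\in\mathcal M}J^*(m;\mu)=\sup_{\mu\in\bar{\mathcal M}}J^*(m;\mu).$$
   Context: A raw observation $X$ has density $f_m$ under state $m\in\{0,\dots,M-1\}$ (probability $\mathbf P_m$) with respect to a common $\sigma$-finite measure; standing assumption: for all $m\neq m'$, $0<\mathbf E_m[\log(f_m(X)/f_{m'}(X))]<\infty$. Deterministic quantizers are measurable maps $\phi$ to $\{0,\dots,l-1\}$ (set $\Phi$); a randomized quantizer $\bar\phi=\sum_jp^j\phi^j$ is a probability distribution on a countable subset of $\Phi$; $\bar\Phi$ is the set of all quantizers. $f_m(u;\phi)=\mathbf P_m(\phi(X)=u)$, $I(m,m';\phi)=\sum_uf_m(u;\phi)\log\frac{f_m(u;\phi)}{f_{m'}(u;\phi)}$, $I(m,m';\bar\phi)=\sum_jp^jI(m,m';\phi^j)$, $I(m;\bar\phi)=\min_{m'\ne m}I(m,m';\bar\phi)$, $I(m)=\sup_{\bar\phi\in\bar\Phi}I(m;\bar\phi)$. The distribution vector of $\bar\phi$ is $q(\bar\phi)=(q_{i,m})$, $q_{i,m}=\mathbf P_m(\bar\phi(X)=i)$ (for randomized $\bar\phi$, $\sum_jp^j\mathbf P_m(\phi^j(X)=i)$). $Q=\{q(\phi):\phi\in\Phi\}$, $\bar Q=\{q(\bar\phi):\bar\phi\in\bar\Phi\}$. For $q\in\bar Q$, $J(m,m';q)=\sum_{i=0}^{l-1}q_{i,m}\log(q_{i,m}/q_{i,m'})$ with $0\log(0/0)=0$. $\bar{\mathcal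 M}$ is the set of Borel probability measures on $\bar Q$ and $\mathcal M\subset\bar{\mathcal M}$ those supported on $Q$; for $\mu\in\bar{\mathcal M}$, $J^*(m,m';\mu)=\int_{\bar Q}J(m,m';q)\,d\mu(q)$ and $J^*(m;\mu)=\min_{m'\neq m}J^*(m,m';\mu)$. *)

theory Defs
  imports "HOL-Probability.Probability"
begin

text \<open>States are the elements of a finite type 'm (M = CARD('m)), quantizer
  outputs are the elements of a finite type 'l (l = CARD('l)).
  The raw observation lives in the measure space N (the common sigma-finite
  dominating measure); f m is the density of X under state m.\<close>

definition Pm :: "'a measure \<Rightarrow> ('m \<Rightarrow> 'a \<Rightarrow> real) \<Rightarrow> 'm \<Rightarrow> 'a measure" where
  "Pm N f m = density N (\<lambda>x. ennreal (f m x))"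

definition quantizers :: "'a measure \<Rightarrow> ('a \<Rightarrow> 'l::finite) set" where
  "quantizers N = {\<phi>. \<phi> \<in> measurable N (count_space UNIV)}"

text \<open>Randomized quantizers: probability distributions (with countable support)
  on deterministic quantizers.\<close>
definition rquantizers :: "'a measure \<Rightarrow> ('a \<Rightarrow> 'l::finite) pmf set" where
  "rquantizers N = {p. set_pmf p \<subseteq> quantizers N}"

definition fq :: "'a measure \<Rightarrow> ('m \<Rightarrow> 'a \<Rightarrow> real) \<Rightarrow> 'm \<Rightarrow> ('a \<Rightarrow> 'l) \<Rightarrow> 'l \<Rightarrow> real" where
  "fq N f m \<phi> u = measure (Pm N f m) (\<phi> -` {u} \<inter> space N)"

text \<open>I(m,m';phi) for deterministic phi (note 0 * ln(...) = 0).\<close>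
definition Idet :: "'a measure \<Rightarrow> ('m \<Rightarrow> 'a \<Rightarrow> real) \<Rightarrow> 'm \<Rightarrow> 'm \<Rightarrow> ('a \<Rightarrow> 'l::finite) \<Rightarrow> real" where
  "Idet N f m m' \<phi> = (\<Sum>u\<in>UNIV. fq N f m \<phi> u * ln (fq N f m \<phi> u / fq N f m' \<phi> u))"

definition Irand :: "'a measure \<Rightarrow> ('m \<Rightarrow> 'a \<Rightarrow> real) \<Rightarrow> 'm \<Rightarrow> 'm \<Rightarrow> ('a \<Rightarrow> 'l::finite) pmf \<Rightarrow> real" where
  "Irand N f m m' p = measure_pmf.expectation p (\<lambda>\<phi>. Idet N f m m' \<phi>)"

definition Imin :: "'a measure \<Rightarrow> ('m::finite \<Rightarrow> 'a \<Rightarrow> real) \<Rightarrow> 'm \<Rightarrow> ('a \<Rightarrow> 'l::finite) pmf \<Rightarrow> real" where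
  "Imin N f m p = Min ((\<lambda>m'. Irand N f m m' p) ` (UNIV - {m}))"

definition Isup :: "'a measure \<Rightarrow> ('m::finite \<Rightarrow> 'a \<Rightarrow> real) \<Rightarrow> 'l::finite itself \<Rightarrow> 'm \<Rightarrow> real" where
  "Isup N f (L :: 'l itself) m = (SUP p \<in> (rquantizers N :: ('a \<Rightarrow> 'l) pmf set). Imin N f m p)"

definition qvec :: "'a measure \<Rightarrow> ('m::finite \<Rightarrow> 'a \<Rightarrow> real) \<Rightarrow> ('a \<Rightarrow> 'l::finite) pmf \<Rightarrow> real ^ 'm ^ 'l" where
  "qvec N f p = (\<chi> i. \<chi> m. measure_pmf.expectation p (\<lambda>\<phi>. fq N f m \<phi> i))"

definition qdet :: "'a measure \<Rightarrow> ('m::finite \<Rightarrow> 'a \<Rightarrow> real) \<Rightarrow> ('a \<Rightarrow> 'l::finite) \<Rightarrow> real ^ 'm ^ 'l" where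
  "qdet N f \<phi> = (\<chi> i. \<chi> m. fq N f m \<phi> i)"

definition Qset :: "'a measure \<Rightarrow> ('m::finite \<Rightarrow> 'a \<Rightarrow> real) \<Rightarrow> (real ^ 'm ^ 'l::finite) set" where
  "Qset N f = qdet N f ` quantizers N"

definition Qbar :: "'a measure \<Rightarrow> ('m::finite \<Rightarrow> 'a \<Rightarrow> real) \<Rightarrow> (real ^ 'm ^ 'l::finite) set" where
  "Qbar N f = qvec N f ` rquantizers N"

definition J :: "'m::finite \<Rightarrow> 'm \<Rightarrow> real ^ 'm ^ 'l::finite \<Rightarrow> real" where
  "J m m' q = (\<Sum>i\<in>UNIV. q $ i $ m * ln (q $ i $ m / q $ i $ m'))"

definition borel_probs :: "'b::topological_space set \<Rightarrow> 'b measure set" where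
  "borel_probs S = {\<mu>. sets \<mu> = sets (restrict_space borel S) \<and> prob_space \<mu>}"

definition Jstar :: "'m::finite \<Rightarrow> 'm \<Rightarrow> (real ^ 'm ^ 'l::finite) measure \<Rightarrow> real" where
  "Jstar m m' \<mu> = integral\<^sup>L \<mu> (J m m')"

definition Jstar_min :: "'m::finite \<Rightarrow> (real ^ 'm ^ 'l::finite) measure \<Rightarrow> real" where
  "Jstar_min m \<mu> = Min ((\<lambda>m'. Jstar m m' \<mu>) ` (UNIV - {m}))"

end

theory Submission
  imports Defs
begin

lemma pw:
  fixes a b s :: real
  assumes "a \<ge> 0" "b \<ge> 0" "b = 0 \<longrightarrow> a = 0" "s > 0"
  shows "(ln s + 1) * a - s * b \<le> a * ln (a / b)"
proof (cases "a = 0")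
  case True then show ?thesis using assms by simp
next
  case False
  then have a: "a > 0" and b: "b > 0" using assms by auto
  have "ln (s * b / a) \<le> s * b / a - 1" using a b assms(4) by (intro ln_le_minus_one) auto
  moreover have "ln (s * b / a) = ln s + ln b - ln a" using a b assms(4) by (simp add: ln_div ln_mult)
  moreover have "ln (a / b) = ln a - ln b" using a b by (simp add: ln_div)
  ultimately have "a * (ln s + ln b - ln a) \<le> a * (s * b / a - 1)" using a
    by (intro mult_left_mono) auto
  moreover have "a * ln (a / b) = a * ln a - a * ln b" unfolding \<open>ln (a / b) = ln a - ln b\<close> by (simp add: right_diff_distrib)
  moreover have "a * (ln s + ln b - ln a) = a * ln s + a * ln b - a * ln a" by (simp add: algebra_simps)
  moreover have "a * (s * b / a - 1) = s * b - a" using a by (simp add: field_simps)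
  moreover have "(ln s + 1) * a = a * ln s + a" by (simp add: algebra_simps)
  ultimately show ?thesis by linarith
qed

lemma absl:
  fixes A B E :: real
  assumes A: "A \<ge> 0" and B: "B \<ge> 0" and H: "\<And>s. s > 0 \<Longrightarrow> (ln s + 1) * A - s * B \<le> E"
  shows "A * ln (A / B) \<le> E \<and> (B = 0 \<longrightarrow> A = 0)"
proof (cases "A = 0")
  case True
  have "0 \<le> E"
  proof (rule ccontr)
    assume "\<not> 0 \<le> E"
    then have E: "E < 0" by simp
    define s where "s = - E / (B + 1)"
    have s: "s > 0" using E B by (simp add: s_def divide_neg_pos)
    have "- s * B > E"
    proof -
      have "- s * B = E * (B / (B + 1))" using B by (simp add: s_def field_simps)
      moreover have "B / (B+1) < 1" using B by simp
      moreover have "E * (B / (B+1)) > E * 1" using E \<open>B / (B+1) < 1\<close> by (intro mult_strict_left_mono_neg) auto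
      ultimately show ?thesis by simp
    qed
    with H[OF s] True show False by simp
  qed
  then show ?thesis using True by simp
next
  case False
  then have Ap: "A > 0" using A by simp
  have Bp: "B > 0"
  proof (rule ccontr)
    assume "\<not> B > 0" then have "B = 0" using B by simp
    define s where "s = exp (\<bar>E\<bar> / A)"
    have "(ln s + 1) * A - s * B = \<bar>E\<bar> + A" using Ap \<open>B = 0\<close> by (simp add: s_def field_simps)
    with H[of s] Ap show False by (simp add: s_def)
  qed
  have "(ln (A / B) + 1) * A - (A / B) * B \<le> E" using H[of "A/B"] Ap Bp by simp
  then show ?thesis using Bp by (simp add: algebra_simps)
qed
lemma comp_meas[measurable]: "(\<lambda>q::real^'m^'l. q $ i $ k) \<in> borel_measurable borel"
  by (intro borel_measurable_continuous_onI continuous_intros)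

lemma J_meas[measurable]: "J k k' \<in> borel_measurable (borel :: (real^'m::finite^'l::finite) measure)"
  unfolding J_def by measurable

lemma G_lb: fixes a b :: real assumes "0 \<le> a" "a \<le> 1" "0 \<le> b" "b \<le> 1"
  shows "-1 \<le> a * ln (a / b)"
proof (cases "a > 0 \<and> b = 0")
  case True then show ?thesis by simp
next
  case False
  then have "(ln 1 + 1) * a - 1 * b \<le> a * ln (a / b)" using assms by (intro pw) auto
  then show ?thesis using assms by simp
qed

locale setting =
  fixes N :: "'a measure" and f :: "'m::finite \<Rightarrow> 'a \<Rightarrow> real"
  assumes meas[measurable]: "\<And>k. f k \<in> borel_measurable N"
  and nn: "\<And>k x. x \<in> space N \<Longrightarrow> 0 \<le> f k x"
  and prob: "\<And>k. prob_space (Pm N f k)"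
  and ae: "\<And>k k'. k \<noteq> k' \<Longrightarrow> AE x in Pm N f k. 0 < f k' x"
  and intg: "\<And>k k'. k \<noteq> k' \<Longrightarrow> integrable (Pm N f k) (\<lambda>x. ln (f k x / f k' x))"
begin

lemma sets_Pm[simp]: "sets (Pm N f k) = sets N" and space_Pm[simp]: "space (Pm N f k) = space N"
  by (simp_all add: Pm_def)

lemma aenn: "AE x in N. 0 \<le> f k x" using nn by (intro AE_I2) auto

lemma meas_eq: assumes "A \<in> sets N" shows "measure (Pm N f k) A = (\<integral>x. f k x * indicator A x \<partial>N)"
proof -
  have "measure (Pm N f k) A = (\<integral>x. indicator A x \<partial>Pm N f k)"
    using assms sets.sets_into_space[OF assms] by (simp add: Int_absorb2)
  also have "\<dots> = (\<integral>x. f k x * indicator A x \<partial>N)"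
    unfolding Pm_def using assms aenn by (subst integral_density) auto
  finally show ?thesis .
qed

lemma int_ind: assumes "A \<in> sets N" shows "integrable N (\<lambda>x. f k x * indicator A x)"
proof -
  interpret prob_space "Pm N f k" by (rule prob)
  have "integrable (Pm N f k) (indicator A :: _ \<Rightarrow> real)" using assms
    by (intro integrable_real_indicator) (auto simp: less_top[symmetric])
  then show ?thesis unfolding Pm_def using assms aenn
    by (subst (asm) integrable_density) auto
qed

definition C :: "'m \<Rightarrow> 'm \<Rightarrow> real" where
  "C k k' = (\<integral>x. \<bar>f k x * ln (f k x / f k' x)\<bar> \<partial>N)"

lemma key:
  assumes "k \<noteq> k'" "A \<in> sets N" "s > 0"
  shows "(ln s + 1) * measure (Pm N f k) A - s * measure (Pm N f k') A \<le> C k k'"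
proof -
  let ?h = "\<lambda>x. f k x * ln (f k x / f k' x)"
  have ih: "integrable N ?h"
    using intg[OF assms(1)] aenn unfolding Pm_def by (subst (asm) integrable_density) auto
  have ae2: "AE x in N. 0 < f k x \<longrightarrow> 0 < f k' x"
    using ae[OF assms(1)] unfolding Pm_def by (subst (asm) AE_density) auto
  have "(ln s + 1) * measure (Pm N f k) A - s * measure (Pm N f k') A
      = (\<integral>x. (ln s + 1) * (f k x * indicator A x) - s * (f k' x * indicator A x) \<partial>N)"
    using int_ind[OF assms(2)] by (simp add: meas_eq[OF assms(2)])
  also have "\<dots> \<le> (\<integral>x. indicator A x * ?h x \<partial>N)"
  proof (rule integral_mono_AE)
    show "integrable N (\<lambda>x. (ln s + 1) * (f k x * indicator A x) - s * (f k' x * indicator A x))"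
      using int_ind[OF assms(2)] by auto
    show "integrable N (\<lambda>x. indicator A x * ?h x)"
      using integrable_mult_indicator[OF assms(2) ih] by simp
    show "AE x in N. (ln s + 1) * (f k x * indicator A x) - s * (f k' x * indicator A x) \<le> indicator A x * ?h x"
      using ae2
    proof eventually_elim
      case (elim x)
      show ?case
      proof (cases "x \<in> space N")
        case True
        have "(ln s + 1) * f k x - s * f k' x \<le> f k x * ln (f k x / f k' x)"
          using pw[of "f k x" "f k' x" s] nn[OF True] elim assms(3) by (smt (verit))
        then show ?thesis by (auto simp: indicator_def algebra_simps)
      next
        case False
        then have "x \<notin> A" using sets.sets_into_space[OF assms(2)] by auto
        then show ?thesis by simp
      qed
    qed
  qed
  also have "\<dots> \<le> C k k'" unfolding C_def
  proof (rule integral_mono)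
    show "integrable N (\<lambda>x. indicator A x * ?h x)"
      using integrable_mult_indicator[OF assms(2) ih] by simp
    show "integrable N (\<lambda>x. \<bar>?h x\<bar>)" using ih by (rule integrable_abs)
    fix x show "indicator A x * ?h x \<le> \<bar>?h x\<bar>"
      by (cases "x \<in> A") auto
  qed
  finally show ?thesis .
qed

definition Cm :: real where "Cm = (\<Sum>k\<in>UNIV. \<Sum>k'\<in>UNIV. \<bar>C k k'\<bar>)"

lemma C_le_Cm: "C k k' \<le> Cm"
proof -
  have "C k k' \<le> \<bar>C k k'\<bar>" by simp
  also have "\<dots> \<le> (\<Sum>k'\<in>UNIV. \<bar>C k k'\<bar>)" by (rule member_le_sum) auto
  also have "\<dots> \<le> Cm" unfolding Cm_def by (rule member_le_sum[where f="\<lambda>k. \<Sum>k'\<in>UNIV. \<bar>C k k'\<bar>"]) (auto intro: sum_nonneg)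
  finally show ?thesis .
qed

lemma Cm_nonneg: "0 \<le> Cm" unfolding Cm_def by (intro sum_nonneg) auto

lemma q_sets: "\<phi> \<in> quantizers N \<Longrightarrow> \<phi> -` {i} \<inter> space N \<in> sets N"
  unfolding quantizers_def by (auto intro: measurable_sets)

lemma fq_nonneg: "0 \<le> fq N f k \<phi> i" unfolding fq_def by simp

lemma fq_le1: "fq N f k \<phi> i \<le> 1"
proof -
  interpret prob_space "Pm N f k" by (rule prob)
  show ?thesis unfolding fq_def by (rule prob_le_1)
qed

lemma term_bounds:
  assumes "\<phi> \<in> quantizers N"
  shows "(fq N f k' \<phi> i = 0 \<longrightarrow> fq N f k \<phi> i = 0)
    \<and> fq N f k \<phi> i * ln (fq N f k \<phi> i / fq N f k' \<phi> i) \<le> Cm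
    \<and> -1 \<le> fq N f k \<phi> i * ln (fq N f k \<phi> i / fq N f k' \<phi> i)"
proof (cases "k = k'")
  case True
  have "fq N f k \<phi> i * ln (fq N f k \<phi> i / fq N f k \<phi> i) = 0"
    by (cases "fq N f k \<phi> i = 0") auto
  then show ?thesis using True Cm_nonneg by simp
next
  case False
  let ?a = "fq N f k \<phi> i" and ?b = "fq N f k' \<phi> i"
  have "?a * ln (?a / ?b) \<le> C k k' \<and> (?b = 0 \<longrightarrow> ?a = 0)"
    using key[OF False q_sets[OF assms]] fq_nonneg
    by (intro absl) (auto simp: fq_def)
  moreover have "(ln 1 + 1) * ?a - 1 * ?b \<le> ?a * ln (?a / ?b)"
    using calculation fq_nonneg by (intro pw) auto
  ultimately show ?thesis using C_le_Cm[of k k'] fq_le1[of k' \<phi> i] fq_nonneg[of k \<phi> i] by auto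
qed

lemma term_abs:
  assumes "\<phi> \<in> quantizers N"
  shows "\<bar>fq N f k \<phi> i * ln (fq N f k \<phi> i / fq N f k' \<phi> i)\<bar> \<le> Cm + 1"
  using term_bounds[OF assms, of k' i k] Cm_nonneg by auto

lemma Idet_abs:
  assumes "\<phi> \<in> quantizers N"
  shows "\<bar>Idet N f k k' (\<phi> :: 'a \<Rightarrow> 'l::finite)\<bar> \<le> real CARD('l) * (Cm + 1)"
proof -
  have "\<bar>Idet N f k k' \<phi>\<bar> \<le> (\<Sum>u\<in>UNIV. \<bar>fq N f k \<phi> u * ln (fq N f k \<phi> u / fq N f k' \<phi> u)\<bar>)"
    unfolding Idet_def by (rule sum_abs)
  also have "\<dots> \<le> (\<Sum>u\<in>(UNIV::'l set). Cm + 1)"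
    by (intro sum_mono term_abs[OF assms])
  finally show ?thesis by simp
qed

lemma Irand_integrable:
  assumes "p \<in> rquantizers N"
  shows "integrable (measure_pmf p) (\<lambda>\<phi>. Idet N f k k' (\<phi> :: 'a \<Rightarrow> 'l::finite))"
  using assms unfolding rquantizers_def
  by (intro measure_pmf.integrable_const_bound[where B="real CARD('l) * (Cm + 1)"] AE_pmfI)
     (auto intro: Idet_abs)

lemma jensen:
  assumes p: "p \<in> rquantizers N"
  shows "J k k' (qvec N f p :: real ^ 'm ^ 'l::finite) \<le> Irand N f k k' p"
proof -
  have sp: "\<And>\<phi>. \<phi> \<in> set_pmf p \<Longrightarrow> \<phi> \<in> quantizers N" using p unfolding rquantizers_def by auto
  let ?G = "\<lambda>i \<phi>. fq N f k \<phi> i * ln (fq N f k \<phi> i / fq N f k' \<phi> i)"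
  have iG: "integrable (measure_pmf p) (?G i)" for i
    by (intro measure_pmf.integrable_const_bound[where B="Cm + 1"] AE_pmfI)
       (auto intro: term_abs sp)
  have ia: "integrable (measure_pmf p) (\<lambda>\<phi>. fq N f j \<phi> i)" for j i
    by (intro measure_pmf.integrable_const_bound[where B="1"] AE_pmfI)
       (auto simp: fq_le1 fq_nonneg)
  have step: "(\<integral>\<phi>. fq N f k \<phi> i \<partial>p) * ln ((\<integral>\<phi>. fq N f k \<phi> i \<partial>p) / (\<integral>\<phi>. fq N f k' \<phi> i \<partial>p))
      \<le> (\<integral>\<phi>. ?G i \<phi> \<partial>p)" for i
  proof -
    have "(\<integral>\<phi>. fq N f k \<phi> i \<partial>p) * ln ((\<integral>\<phi>. fq N f k \<phi> i \<partial>p) / (\<integral>\<phi>. fq N f k' \<phi> i \<partial>p))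
      \<le> (\<integral>\<phi>. ?G i \<phi> \<partial>p) \<and> ((\<integral>\<phi>. fq N f k' \<phi> i \<partial>p) = 0 \<longrightarrow> (\<integral>\<phi>. fq N f k \<phi> i \<partial>p) = 0)"
    proof (rule absl)
      show "0 \<le> (\<integral>\<phi>. fq N f k \<phi> i \<partial>p)" "0 \<le> (\<integral>\<phi>. fq N f k' \<phi> i \<partial>p)"
        by (simp_all add: integral_nonneg fq_nonneg)
      fix s :: real assume s: "s > 0"
      have "(ln s + 1) * (\<integral>\<phi>. fq N f k \<phi> i \<partial>p) - s * (\<integral>\<phi>. fq N f k' \<phi> i \<partial>p)
          = (\<integral>\<phi>. (ln s + 1) * fq N f k \<phi> i - s * fq N f k' \<phi> i \<partial>p)"
        using ia by simp
      also have "\<dots> \<le> (\<integral>\<phi>. ?G i \<phi> \<partial>p)"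
      proof (rule integral_mono_AE)
        show "integrable (measure_pmf p) (\<lambda>\<phi>. (ln s + 1) * fq N f k \<phi> i - s * fq N f k' \<phi> i)"
          using ia by auto
        show "integrable (measure_pmf p) (?G i)" by (rule iG)
        show "AE \<phi> in measure_pmf p. (ln s + 1) * fq N f k \<phi> i - s * fq N f k' \<phi> i \<le> ?G i \<phi>"
          by (intro AE_pmfI pw s fq_nonneg) (use term_bounds sp in blast)
      qed
      finally show "(ln s + 1) * (\<integral>\<phi>. fq N f k \<phi> i \<partial>p) - s * (\<integral>\<phi>. fq N f k' \<phi> i \<partial>p) \<le> (\<integral>\<phi>. ?G i \<phi> \<partial>p)" .
    qed
    then show ?thesis by blast
  qed
  have "J k k' (qvec N f p :: real ^ 'm ^ 'l) \<le> (\<Sum>i\<in>(UNIV :: 'l set). (\<integral>\<phi>. ?G i \<phi> \<partial>p))"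
    unfolding J_def qvec_def by (simp, intro sum_mono step)
  also have "\<dots> = Irand N f k k' p"
  proof -
    have "(\<integral>\<phi>. (\<Sum>i\<in>(UNIV :: 'l set). ?G i \<phi>) \<partial>p) = (\<Sum>i\<in>(UNIV :: 'l set). (\<integral>\<phi>. ?G i \<phi> \<partial>p))"
      by (rule Bochner_Integration.integral_sum) (rule iG)
    then show ?thesis unfolding Irand_def Idet_def by simp
  qed
  finally show ?thesis .
qed


definition mix :: "real \<Rightarrow> 'b pmf \<Rightarrow> 'b pmf \<Rightarrow> 'b pmf" where
  "mix u p1 p2 = bind_pmf (bernoulli_pmf u) (\<lambda>b. if b then p1 else p2)"

lemma mix_rq: "p1 \<in> rquantizers N \<Longrightarrow> p2 \<in> rquantizers N \<Longrightarrow> mix u p1 p2 \<in> rquantizers N"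
  unfolding rquantizers_def mix_def by (auto split: if_splits)

lemma Irand_T:
  assumes "p \<in> rquantizers N"
  shows "Irand N f k k' p = (\<integral>\<phi>. (if \<phi> \<in> quantizers N then Idet N f k k' (\<phi> :: 'a \<Rightarrow> 'l::finite) else 0) \<partial>p)"
  unfolding Irand_def using assms unfolding rquantizers_def
  by (intro integral_cong_AE) (auto intro!: AE_pmfI)

lemma mix_Irand:
  assumes u: "0 \<le> u" "u \<le> 1" and p: "p1 \<in> rquantizers N" "p2 \<in> rquantizers N"
  shows "Irand N f k k' (mix u p1 p2 :: ('a \<Rightarrow> 'l::finite) pmf) = u * Irand N f k k' p1 + (1 - u) * Irand N f k k' p2"
proof -
  define T where "T = (\<lambda>\<phi>::'a \<Rightarrow> 'l. if \<phi> \<in> quantizers N then Idet N f k k' \<phi> else 0)"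
  have Tb: "\<bar>T \<phi>\<bar> \<le> real CARD('l) * (Cm + 1)" for \<phi>
    unfolding T_def using Idet_abs[of \<phi> k k'] Cm_nonneg by auto
  have "measure_pmf (mix u p1 p2) = measure_pmf (bernoulli_pmf u) \<bind> (\<lambda>b. measure_pmf (if b then p1 else p2))"
    unfolding mix_def by (rule measure_pmf_bind)
  then have "(\<integral>\<phi>. T \<phi> \<partial>mix u p1 p2) = (\<integral>b. (\<integral>\<phi>. T \<phi> \<partial>(if b then p1 else p2)) \<partial>bernoulli_pmf u)"
    apply simp
    apply (rule integral_bind[where K="count_space UNIV" and B="real CARD('l) * (Cm + 1)" and B'=1])
    using Tb by (auto simp: space_subprob_algebra measure_pmf.subprob_space_axioms prob_space.emeasure_space_1[OF prob_space_measure_pmf]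
         intro: measure_pmf.finite_measure_axioms)
  also have "\<dots> = u * (\<integral>\<phi>. T \<phi> \<partial>p1) + (1 - u) * (\<integral>\<phi>. T \<phi> \<partial>p2)"
    using u by simp
  finally show ?thesis using Irand_T[OF p(1)] Irand_T[OF p(2)] Irand_T[OF mix_rq[OF p]]
    unfolding T_def by simp
qed


lemma qvec_bounds: "0 \<le> qvec N f p $ i $ k \<and> qvec N f p $ i $ k \<le> 1"
proof -
  have ia: "integrable (measure_pmf p) (\<lambda>\<phi>. fq N f k \<phi> i)"
    by (intro measure_pmf.integrable_const_bound[where B="1"] AE_pmfI)
       (auto simp: fq_le1 fq_nonneg)
  show ?thesis unfolding qvec_def
    using measure_pmf.integral_le_const[OF ia, of 1] by (auto simp: integral_nonneg fq_nonneg fq_le1)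
qed

lemma Irand_le:
  assumes "p \<in> rquantizers N"
  shows "Irand N f k k' (p :: ('a \<Rightarrow> 'l::finite) pmf) \<le> real CARD('l) * (Cm + 1)"
  unfolding Irand_def
proof (intro measure_pmf.integral_le_const AE_pmfI Irand_integrable[OF assms])
  fix \<phi> assume "\<phi> \<in> set_pmf p"
  then have "\<phi> \<in> quantizers N" using assms unfolding rquantizers_def by auto
  from Idet_abs[OF this, of k k'] show "Idet N f k k' \<phi> \<le> real CARD('l) * (Cm + 1)" by simp
qed

lemma J_abs:
  assumes "q \<in> (Qbar N f :: (real ^ 'm ^ 'l::finite) set)"
  shows "\<bar>J k k' q\<bar> \<le> real CARD('l) * (Cm + 1)"
proof -
  obtain p where p: "p \<in> rquantizers N" and q: "q = qvec N f p" using assms unfolding Qbar_def by auto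
  have "J k k' q \<le> real CARD('l) * (Cm + 1)" using jensen[OF p, of k k'] Irand_le[OF p, of k k'] q by simp
  moreover have "- real CARD('l) \<le> J k k' q"
  proof -
    have "(\<Sum>i\<in>(UNIV::'l set). -1) \<le> J k k' q" unfolding J_def q
      by (intro sum_mono G_lb) (use qvec_bounds in auto)
    then show ?thesis by simp
  qed
  ultimately show ?thesis using Cm_nonneg by (auto simp: abs_le_iff) (smt (verit) mult_le_cancel_left1 of_nat_0_le_iff)
qed

lemma qdet_Qbar: "\<phi> \<in> quantizers N \<Longrightarrow> qdet N f \<phi> \<in> Qbar N f"
  unfolding Qbar_def rquantizers_def
  by (rule image_eqI[where x="return_pmf \<phi>"]) (auto simp: qvec_def qdet_def)

lemma J_qdet: "J k k' (qdet N f \<phi>) = Idet N f k k' \<phi>"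
  unfolding J_def qdet_def Idet_def by simp

lemma dir1:
  assumes p: "p \<in> (rquantizers N :: ('a \<Rightarrow> 'l::finite) pmf set)" and S: "qdet N f ` quantizers N \<subseteq> (S :: (real ^ 'm ^ 'l) set)"
  shows "\<exists>\<mu>\<in>borel_probs S. Imin N f k p \<le> Jstar_min k \<mu>"
proof -
  obtain \<phi>0 where \<phi>0: "\<phi>0 \<in> set_pmf p" using set_pmf_not_empty[of p] by blast
  then have q0: "\<phi>0 \<in> quantizers N" using p unfolding rquantizers_def by auto
  define g :: "('a \<Rightarrow> 'l) \<Rightarrow> real^'m^'l" where "g = (\<lambda>\<phi>. if \<phi> \<in> quantizers N then qdet N f \<phi> else qdet N f \<phi>0)"
  have gS: "g \<phi> \<in> S" for \<phi> using S q0 unfolding g_def by auto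
  have gm: "g \<in> measurable (measure_pmf p) (restrict_space borel S)"
    using gS by (simp add: space_restrict_space)
  define \<mu> where "\<mu> = distr (measure_pmf p) (restrict_space borel S) g"
  have "\<mu> \<in> borel_probs S" unfolding borel_probs_def \<mu>_def
    using gm by (auto intro: prob_space.prob_space_distr prob_space_measure_pmf)
  moreover have "Jstar k k' \<mu> = Irand N f k k' p" for k'
  proof -
    have "Jstar k k' \<mu> = (\<integral>\<phi>. J k k' (g \<phi>) \<partial>p)" unfolding Jstar_def \<mu>_def
      by (rule integral_distr[OF gm]) (intro measurable_restrict_space1 J_meas)
    also have "\<dots> = Irand N f k k' p" unfolding Irand_def
      using p unfolding rquantizers_def
      by (intro integral_cong_AE) (auto intro!: AE_pmfI simp: g_def J_qdet)
    finally show ?thesis .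
  qed
  then have "Jstar_min k \<mu> = Imin N f k p" unfolding Jstar_min_def Imin_def by simp
  ultimately show ?thesis by force
qed


lemma dir2:
  assumes card: "CARD('m) \<ge> 2" and S: "S \<subseteq> (Qbar N f :: (real^'m^'l::finite) set)"
    and \<mu>: "\<mu> \<in> borel_probs S" and e: "\<epsilon> > 0"
  shows "\<exists>p \<in> (rquantizers N :: ('a \<Rightarrow> 'l) pmf set). Jstar_min k \<mu> - \<epsilon> \<le> Imin N f k p"
proof -
  define K :: "(real^'m) set" where
    "K = {y. \<exists>p \<in> (rquantizers N :: ('a \<Rightarrow> 'l) pmf set). \<forall>k'. y $ k' \<le> Irand N f k k' p}"
  have convK: "convex K" unfolding convex_def
  proof (intro ballI allI impI)
    fix y z and u v :: real assume y: "y \<in> K" and z: "z \<in> K" and u: "0 \<le> u" and v: "0 \<le> v" and uv: "u + v = 1"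
    obtain p1 where p1: "p1 \<in> (rquantizers N :: ('a \<Rightarrow> 'l) pmf set)" "\<forall>k'. y $ k' \<le> Irand N f k k' p1"
      using y unfolding K_def by auto
    obtain p2 where p2: "p2 \<in> (rquantizers N :: ('a \<Rightarrow> 'l) pmf set)" "\<forall>k'. z $ k' \<le> Irand N f k k' p2"
      using z unfolding K_def by auto
    have "(u *\<^sub>R y + v *\<^sub>R z) $ k' \<le> Irand N f k k' (mix u p1 p2)" for k'
    proof -
      have "u * y $ k' \<le> u * Irand N f k k' p1" using p1 u by (intro mult_left_mono) auto
      moreover have "v * z $ k' \<le> v * Irand N f k k' p2" using p2 v by (intro mult_left_mono) auto
      moreover have "Irand N f k k' (mix u p1 p2) = u * Irand N f k k' p1 + v * Irand N f k k' p2"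
        using mix_Irand[OF u _ p1(1) p2(1), of k k'] uv v by (simp add: eq_diff_eq'[symmetric] add.commute)
      ultimately show ?thesis by simp
    qed
    then show "u *\<^sub>R y + v *\<^sub>R z \<in> K" unfolding K_def using mix_rq[OF p1(1) p2(1)] by blast
  qed
  define x :: "real^'m" where "x = (\<chi> k'. Jstar k k' \<mu>)"
  interpret P: prob_space \<mu> using \<mu> unfolding borel_probs_def by auto
  have setsmu: "sets \<mu> = sets (restrict_space borel S)" using \<mu> unfolding borel_probs_def by auto
  have spmu: "space \<mu> = S" using sets_eq_imp_space_eq[OF setsmu] by (simp add: space_restrict_space)
  have Jm: "J k k' \<in> borel_measurable \<mu>" for k'
    using measurable_restrict_space1[OF J_meas[of k k'], where \<Omega>=S] measurable_cong_sets[OF setsmu refl] by blast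
  have Jint: "integrable \<mu> (J k k')" for k'
    by (rule P.integrable_const_bound[where B="real CARD('l) * (Cm + 1)"]) 
       (use J_abs S spmu Jm in \<open>auto intro!: AE_I2\<close>)
  have vK: "(\<chi> k'. J k k' q) \<in> K" if qS: "q \<in> S" for q
  proof -
    obtain p where p: "p \<in> rquantizers N" and q: "q = qvec N f p" using qS S unfolding Qbar_def by auto
    show ?thesis unfolding K_def using p jensen[OF p] q by auto
  qed
  have xcl: "x \<in> closure K"
  proof (rule ccontr)
    assume "x \<notin> closure K"
    then obtain a b where ab: "inner a x < b" "\<forall>y\<in>closure K. b < inner a y"
      using separating_hyperplane_closed_point[OF convex_closure[OF convK] closed_closure] by blast
    have "inner a x = (\<Sum>k'\<in>UNIV. a $ k' * Jstar k k' \<mu>)" unfolding x_def inner_vec_def by simp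
    also have "\<dots> = (\<integral>q. (\<Sum>k'\<in>UNIV. a $ k' * J k k' q) \<partial>\<mu>)"
      unfolding Jstar_def using Jint
      by (subst Bochner_Integration.integral_sum) auto
    finally have eq: "inner a x = (\<integral>q. (\<Sum>k'\<in>UNIV. a $ k' * J k k' q) \<partial>\<mu>)" .
    have "b \<le> (\<integral>q. (\<Sum>k'\<in>UNIV. a $ k' * J k k' q) \<partial>\<mu>)"
    proof (rule P.integral_ge_const)
      show "integrable \<mu> (\<lambda>q. \<Sum>k'\<in>UNIV. a $ k' * J k k' q)" using Jint by auto
      show "AE q in \<mu>. b \<le> (\<Sum>k'\<in>UNIV. a $ k' * J k k' q)"
      proof (rule AE_I2)
        fix q assume "q \<in> space \<mu>"
        then have "(\<chi> k'. J k k' q) \<in> closure K" using vK spmu closure_subset by blast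
        then have "b < inner a (\<chi> k'. J k k' q)" using ab by blast
        then show "b \<le> (\<Sum>k'\<in>UNIV. a $ k' * J k k' q)" unfolding inner_vec_def by simp
      qed
    qed
    then show False using ab eq by simp
  qed
  obtain y where y: "y \<in> K" "dist y x < \<epsilon>" using xcl e unfolding closure_approachable by blast
  obtain p where p: "p \<in> (rquantizers N :: ('a \<Rightarrow> 'l) pmf set)" "\<forall>k'. y $ k' \<le> Irand N f k k' p"
    using y unfolding K_def by auto
  have ne: "UNIV - {k} \<noteq> {}"
  proof
    assume "UNIV - {k} = {}"
    then have "UNIV = {k}" by auto
    then have "card (UNIV :: 'm set) = 1" by (metis card.empty card_insert_disjoint empty_iff finite.emptyI One_nat_def)
    then show False using card by simp
  qed
  obtain k0 where k0: "k0 \<in> UNIV - {k}" "Imin N f k p = Irand N f k k0 p"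
  proof -
    have "Min ((\<lambda>m'. Irand N f k m' p) ` (UNIV - {k})) \<in> (\<lambda>m'. Irand N f k m' p) ` (UNIV - {k})"
      using ne by (intro Min_in) auto
    then show ?thesis using that unfolding Imin_def by blast
  qed
  have "Jstar_min k \<mu> \<le> Jstar k k0 \<mu>" unfolding Jstar_min_def using k0 by (intro Min_le) auto
  moreover have "\<bar>(y - x) $ k0\<bar> \<le> norm (y - x)" by (rule component_le_norm_cart)
  moreover have "norm (y - x) < \<epsilon>" using y by (simp add: dist_norm)
  moreover have "(y - x) $ k0 = y $ k0 - Jstar k k0 \<mu>" unfolding x_def by simp
  moreover have "y $ k0 \<le> Imin N f k p" using p(2) k0(2) by simp
  ultimately have "Jstar_min k \<mu> - \<epsilon> \<le> Imin N f k p" by linarith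
  then show ?thesis using p(1) by blast
qed


end

lemma sup_eq:
  fixes F :: "'x \<Rightarrow> real" and G :: "'y \<Rightarrow> real"
  assumes R: "R \<noteq> {}" and B: "B \<noteq> {}" and d1: "\<forall>p\<in>R. \<exists>\<mu>\<in>B. F p \<le> G \<mu>"
    and d2: "\<forall>\<mu>\<in>B. \<forall>\<epsilon>>0. \<exists>p\<in>R. G \<mu> - \<epsilon> \<le> F p"
  shows "(SUP p\<in>R. F p) = (SUP \<mu>\<in>B. G \<mu>)"
proof (cases "bdd_above (F ` R)")
  case True
  then obtain M where M: "\<And>p. p \<in> R \<Longrightarrow> F p \<le> M" unfolding bdd_above_def by blast
  have bG: "bdd_above (G ` B)" unfolding bdd_above_def
  proof (intro exI ballI)
    fix z assume "z \<in> G ` B"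
    then obtain \<mu> where \<mu>: "\<mu> \<in> B" "z = G \<mu>" by blast
    have "\<forall>\<epsilon>>0. \<exists>p\<in>R. G \<mu> - \<epsilon> \<le> F p" using d2 \<mu>(1) by blast
    then obtain p where p: "p \<in> R" "G \<mu> - 1 \<le> F p" using zero_less_one by blast
    have "F p \<le> M" using M p(1) by blast
    then show "z \<le> M + 1" using p(2) \<mu>(2) by linarith
  qed
  show ?thesis
  proof (rule antisym)
    show "(SUP p\<in>R. F p) \<le> (SUP \<mu>\<in>B. G \<mu>)"
    proof (rule cSUP_least[OF R])
      fix p assume "p \<in> R"
      then obtain \<mu> where "\<mu> \<in> B" "F p \<le> G \<mu>" using d1 by blast
      then show "F p \<le> (SUP \<mu>\<in>B. G \<mu>)" using bG by (intro cSUP_upper2) auto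
    qed
    show "(SUP \<mu>\<in>B. G \<mu>) \<le> (SUP p\<in>R. F p)"
    proof (rule cSUP_least[OF B])
      fix \<mu> assume \<mu>: "\<mu> \<in> B"
      show "G \<mu> \<le> (SUP p\<in>R. F p)"
      proof (rule field_le_epsilon)
        fix e :: real assume "0 < e"
        moreover have "\<forall>\<epsilon>>0. \<exists>p\<in>R. G \<mu> - \<epsilon> \<le> F p" using d2 \<mu> by blast
        ultimately obtain p where "p \<in> R" "G \<mu> - e \<le> F p" by blast
        moreover have "F p \<le> (SUP p\<in>R. F p)" using True calculation(1) by (intro cSUP_upper) auto
        ultimately show "G \<mu> \<le> (SUP p\<in>R. F p) + e" by simp
      qed
    qed
  qed
next
  case False
  have bG: "\<not> bdd_above (G ` B)"
  proof
    assume "bdd_above (G ` B)"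
    then obtain M where M: "\<And>\<mu>. \<mu> \<in> B \<Longrightarrow> G \<mu> \<le> M" unfolding bdd_above_def by blast
    have "bdd_above (F ` R)" unfolding bdd_above_def
    proof (intro exI ballI)
      fix z assume "z \<in> F ` R"
      then obtain p where p: "p \<in> R" "z = F p" by blast
      then obtain \<mu> where "\<mu> \<in> B" "F p \<le> G \<mu>" using d1 by blast
      then have "G \<mu> \<le> M" "F p \<le> G \<mu>" using M by blast+
      then show "z \<le> M" using p(2) by linarith
    qed
    then show False using False by simp
  qed
  have n1: "\<not> (\<forall>x\<in>F ` R. x \<le> z)" for z using False unfolding bdd_above_def by blast
  have n2: "\<not> (\<forall>x\<in>G ` B. x \<le> z)" for z using bG unfolding bdd_above_def by blast
  have e1: "(\<lambda>z. \<forall>x\<in>F ` R. x \<le> z) = (\<lambda>z. False)" using n1 by (intro ext) blast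
  have e2: "(\<lambda>z. \<forall>x\<in>G ` B. x \<le> z) = (\<lambda>z. False)" using n2 by (intro ext) blast
  show ?thesis unfolding Sup_real_def e1 e2 ..
qed



theorem lemmaA2:
  fixes N :: "'a measure"
    and f :: "'m::finite \<Rightarrow> 'a \<Rightarrow> real"
    and m :: 'm
  assumes "CARD('m) \<ge> 2"
    and "sigma_finite_measure N"
    and "\<And>k. f k \<in> borel_measurable N"
    and "\<And>k x. x \<in> space N \<Longrightarrow> 0 \<le> f k x"
    and "\<And>k. prob_space (Pm N f k)"
    and "\<And>k k'. k \<noteq> k' \<Longrightarrow> AE x in Pm N f k. 0 < f k' x"
    and "\<And>k k'. k \<noteq> k' \<Longrightarrow> integrable (Pm N f k) (\<lambda>x. ln (f k x / f k' x))"
    and "\<And>k k'. k \<noteq> k' \<Longrightarrow> 0 < (\<integral>x. ln (f k x / f k' x) \<partial>Pm N f k)"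
  shows "Isup N f TYPE('l::finite) m
           = (SUP \<mu> \<in> borel_probs (Qset N f :: (real ^ 'm ^ 'l) set). Jstar_min m \<mu>)
       \<and> Isup N f TYPE('l) m
           = (SUP \<mu> \<in> borel_probs (Qbar N f :: (real ^ 'm ^ 'l) set). Jstar_min m \<mu>)"
proof -
  interpret setting N f
    by (rule setting.intro) (fact assms(3), fact assms(4), fact assms(5), fact assms(6), fact assms(7))
  have Rne: "(rquantizers N :: ('a \<Rightarrow> 'l) pmf set) \<noteq> {}"
  proof -
    have "(\<lambda>_. undefined :: 'l) \<in> measurable N (count_space UNIV)" by (rule measurable_const) simp
    then have "return_pmf (\<lambda>_. undefined :: 'l) \<in> (rquantizers N :: ('a \<Rightarrow> 'l) pmf set)"
      unfolding rquantizers_def quantizers_def by simp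
    then show ?thesis by blast
  qed
  have main: "Isup N f TYPE('l) m = (SUP \<mu> \<in> borel_probs S. Jstar_min m \<mu>)"
    if S1: "qdet N f ` quantizers N \<subseteq> S" and S2: "S \<subseteq> (Qbar N f :: (real ^ 'm ^ 'l) set)" for S
  proof -
    have d1: "\<forall>p\<in>(rquantizers N :: ('a \<Rightarrow> 'l) pmf set). \<exists>\<mu>\<in>borel_probs S. Imin N f m p \<le> Jstar_min m \<mu>"
    proof
      fix p assume "p \<in> (rquantizers N :: ('a \<Rightarrow> 'l) pmf set)"
      from dir1[OF this S1] show "\<exists>\<mu>\<in>borel_probs S. Imin N f m p \<le> Jstar_min m \<mu>" .
    qed
    obtain p0 where "p0 \<in> (rquantizers N :: ('a \<Rightarrow> 'l) pmf set)" using Rne by blast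
    then have Bne: "borel_probs S \<noteq> {}" using d1 by blast
    have d2: "\<forall>\<mu>\<in>borel_probs S. \<forall>\<epsilon>>0. \<exists>p\<in>(rquantizers N :: ('a \<Rightarrow> 'l) pmf set). Jstar_min m \<mu> - \<epsilon> \<le> Imin N f m p"
    proof (intro ballI allI impI)
      fix \<mu> and \<epsilon> :: real assume "\<mu> \<in> borel_probs S" "\<epsilon> > 0"
      from dir2[OF assms(1) S2 this] show "\<exists>p\<in>(rquantizers N :: ('a \<Rightarrow> 'l) pmf set). Jstar_min m \<mu> - \<epsilon> \<le> Imin N f m p" .
    qed
    show ?thesis unfolding Isup_def by (rule sup_eq[OF Rne Bne d1 d2])
  qed
  show ?thesis
  proof
    show "Isup N f TYPE('l) m = (SUP \<mu> \<in> borel_probs (Qset N f :: (real ^ 'm ^ 'l) set). Jstar_min m \<mu>)"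
      by (rule main) (unfold Qset_def, rule subset_refl, rule image_subsetI, erule qdet_Qbar)
    show "Isup N f TYPE('l) m = (SUP \<mu> \<in> borel_probs (Qbar N f :: (real ^ 'm ^ 'l) set). Jstar_min m \<mu>)"
      by (rule main) (rule image_subsetI, erule qdet_Qbar, rule subset_refl)
  qed
qed

end
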